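(* For all $\Gamma\subseteq\{0,1\}^\infty$, $$\dim_P(\Gamma)=\inf \mathscr G_{\mathrm{str}}(\Gamma),$$ where $\mathscr G_{\mathrm{str}}(\Gamma)=\{s\in[0,\infty) : \text{there exists a learning function } l \text{ which strongly } s\text{-learns every } X\in\Gamma\}$.
   Context: $\dim_P$ denotes the (classical) packing dimension on the Cantor space $\{0,1\}^\infty$; equivalently, for $s\in[0,\infty)$ an $s$-gale is a function $d:\{0,1\}^*\to[0,\infty)$ with $d(w)2^{-s|w|}=d(w0)2^{-s(|w|+1)}+d(w1)2^{-s(|w|+1)}$ for all $w$, $d$ succeeds strongly on $X$ if $\liminf_n d(X\upharpoonright n)=\infty$, and $\dim_P(\Gamma)=\inf\{s: \text{some } s\text{-gale succeeds strongly on every } X\in\Gamma\}$. A learning function is a function $l:\{0,1\}^*\to\{0,1\}$ (yes $=1$, no $=0$). $Y\upharpoonright i$ is the length-$i$ prefix of $Y$; $\lambda$ is the uniform (Lebesgue) measure on $\{0,1\}^\infty$. For nonempty $w$, $\mathrm{AVG}_l(w)=\frac{1}{|w|}\sum_{i=0}^{|w|} l(w\upharpoonright i)$. For $s\ge0$, $l$ strongly $s$-learns $X$ iff (i) for all $n\in\mathbb N$, $\lambda(\{Y : \#\{i\in\mathbb N: l(Y\upharpoonright i)=1\}\ge n\})\le 2^{-n}$, and (ii) $\liminf_{n\to\infty}\mathrm{AVG}_l(X\upharpoonright n)\ge 1-s$ (no computability restriction on $l$). *)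

theory Defs
  imports "HOL-Probability.Probability"
begin

definition prefix :: "(nat \<Rightarrow> bool) \<Rightarrow> nat \<Rightarrow> bool list" where
  "prefix X n = map X [0..<n]"

definition is_gale :: "real \<Rightarrow> (bool list \<Rightarrow> real) \<Rightarrow> bool" where
  "is_gale s d \<longleftrightarrow> (\<forall>w. d w \<ge> 0) \<and>
     (\<forall>w. d w * 2 powr (- s * real (length w))
          = d (w @ [False]) * 2 powr (- s * real (length w + 1))
          + d (w @ [True]) * 2 powr (- s * real (length w + 1)))"

definition succeeds_strongly :: "(bool list \<Rightarrow> real) \<Rightarrow> (nat \<Rightarrow> bool) \<Rightarrow> bool" where
  "succeeds_strongly d X \<longleftrightarrow>
     Liminf sequentially (\<lambda>n. ereal (d (prefix X n))) = \<infinity>"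

definition packing_dim :: "(nat \<Rightarrow> bool) set \<Rightarrow> real" where
  "packing_dim \<Gamma> = Inf {s. s \<ge> 0 \<and> (\<exists>d. is_gale s d \<and> (\<forall>X\<in>\<Gamma>. succeeds_strongly d X))}"

definition cantor_measure :: "(nat \<Rightarrow> bool) measure" where
  "cantor_measure = (\<Pi>\<^sub>M i\<in>(UNIV::nat set). measure_pmf (bernoulli_pmf (1/2)))"

text \<open>Learning function: True = yes, False = no.\<close>
definition yes_set :: "(bool list \<Rightarrow> bool) \<Rightarrow> (nat \<Rightarrow> bool) \<Rightarrow> nat set" where
  "yes_set l Y = {i. l (prefix Y i)}"

definition AVG :: "(bool list \<Rightarrow> bool) \<Rightarrow> bool list \<Rightarrow> real" where
  "AVG l w = (\<Sum>i=0..length w. (if l (take i w) then 1 else 0)) / real (length w)"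

definition strongly_learns :: "(bool list \<Rightarrow> bool) \<Rightarrow> real \<Rightarrow> (nat \<Rightarrow> bool) \<Rightarrow> bool" where
  "strongly_learns l s X \<longleftrightarrow>
     (\<forall>n::nat. measure cantor_measure
         {Y \<in> space cantor_measure. infinite (yes_set l Y) \<or> card (yes_set l Y) \<ge> n}
       \<le> 2 powr (- real n)) \<and>
     Liminf sequentially (\<lambda>n. ereal (AVG l (prefix X n))) \<ge> ereal (1 - s)"

definition G_str :: "(nat \<Rightarrow> bool) set \<Rightarrow> real set" where
  "G_str \<Gamma> = {s. s \<ge> 0 \<and> (\<exists>l. \<forall>X\<in>\<Gamma>. strongly_learns l s X)}"

end

theory Submission
  imports Defs
begin


abbreviation "BM \<equiv> measure_pmf (bernoulli_pmf (1/2))"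

lemma cm_seq: "sequence_space BM"
  by (simp add: sequence_space_def product_prob_space_def product_prob_space_axioms_def
     product_sigma_finite_def prob_space_measure_pmf prob_space_imp_sigma_finite)

interpretation CS: sequence_space BM by (rule cm_seq)

lemma cm_eq: "cantor_measure = (\<Pi>\<^sub>M i\<in>UNIV. BM)" by (simp add: cantor_measure_def)

lemma prob_cm: "prob_space cantor_measure"
  unfolding cm_eq by (rule CS.P.prob_space_axioms)

lemma space_cm[simp]: "space cantor_measure = UNIV"
  unfolding cm_eq by (simp add: space_PiM)

lemma dec_emeasure:
  assumes S: "S \<in> sets cantor_measure"
  shows "emeasure cantor_measure S =
    (emeasure cantor_measure (case_nat True -` S) + emeasure cantor_measure (case_nat False -` S)) / 2"
proof -
  let ?S = "(\<Pi>\<^sub>M i\<in>UNIV. BM)"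
  have S': "S \<in> sets ?S" using S cm_eq by simp
  have "emeasure ?S S = emeasure (distr (BM \<Otimes>\<^sub>M ?S) ?S (\<lambda>(s, \<omega>). case_nat s \<omega>)) S"
    by (simp add: CS.PiM_iter)
  also have "\<dots> = emeasure (BM \<Otimes>\<^sub>M ?S) ((\<lambda>(s, \<omega>). case_nat s \<omega>) -` S \<inter> space (BM \<Otimes>\<^sub>M ?S))"
    by (rule emeasure_distr[OF _ S']) measurable
  also have "\<dots> = (\<integral>\<^sup>+x. emeasure ?S (Pair x -` ((\<lambda>(s, \<omega>). case_nat s \<omega>) -` S \<inter> space (BM \<Otimes>\<^sub>M ?S))) \<partial>BM)"
    by (rule CS.P.emeasure_pair_measure_alt) (rule measurable_sets[OF _ S']; measurable)
  also have "\<dots> = (\<integral>\<^sup>+x. emeasure ?S (case_nat x -` S) \<partial>BM)"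
    by (intro nn_integral_cong arg_cong2[where f=emeasure]) (auto simp: space_pair_measure space_PiM)
  also have "\<dots> = (emeasure ?S (case_nat True -` S) + emeasure ?S (case_nat False -` S)) / 2"
    by (subst nn_integral_measure_pmf_support[of UNIV]) (auto simp: UNIV_bool divide_ennreal_def add.commute distrib_right)
  finally show ?thesis by (simp add: cm_eq)
qed


interpretation cmP: prob_space cantor_measure by (rule prob_cm)

lemma preimg_sets: "S \<in> sets cantor_measure \<Longrightarrow> case_nat b -` S \<in> sets cantor_measure"
proof -
  assume S: "S \<in> sets cantor_measure"
  have "case_nat b \<in> cantor_measure \<rightarrow>\<^sub>M cantor_measure" unfolding cm_eq by measurable
  from measurable_sets[OF this S] show ?thesis by simp
qed

lemma half_enn: "0 \<le> (x::real) \<Longrightarrow> ennreal x / 2 = ennreal (x / 2)"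
  using ennreal_divide_numeral[of x "num.Bit0 num.One"] by simp

lemma dec_measure:
  assumes S: "S \<in> sets cantor_measure"
  shows "measure cantor_measure S =
    (measure cantor_measure (case_nat True -` S) + measure cantor_measure (case_nat False -` S)) / 2"
proof -
  let ?a = "measure cantor_measure (case_nat True -` S) + measure cantor_measure (case_nat False -` S)"
  have "ennreal (measure cantor_measure S) = ennreal ?a / 2"
    using dec_emeasure[OF S]
    by (simp add: cmP.emeasure_eq_measure ennreal_plus[symmetric] del: ennreal_plus)
  also have "\<dots> = ennreal (?a / 2)" by (rule half_enn) simp
  finally show ?thesis by (simp add: add_nonneg_nonneg)
qed



lemma prefix_length[simp]: "length (prefix Y i) = i" by (simp add: prefix_def)
lemma prefix_0[simp]: "prefix Y 0 = []" by (simp add: prefix_def)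
lemma prefix_Suc: "prefix Y (Suc i) = prefix Y i @ [Y i]" by (simp add: prefix_def)
lemma prefix_cons_Suc: "prefix (case_nat b Y) (Suc i) = b # prefix Y i"
  by (induct i) (auto simp: prefix_Suc)
lemma take_prefix: "take j (prefix Y i) = prefix Y (min j i)"
  by (simp add: prefix_def take_map take_upt min_def)
lemma prefix_nth: "j < i \<Longrightarrow> prefix Y i ! j = Y j" by (simp add: prefix_def)

lemma prefix_eq_iff: "(prefix Y i = v) \<longleftrightarrow> (length v = i \<and> (\<forall>j<i. Y j = v ! j))"
  by (auto simp: prefix_def list_eq_iff_nth_eq)

lemma meas_prefix: "(\<lambda>Y. prefix Y i) \<in> measurable cantor_measure (count_space UNIV)"
proof (rule iffD2[OF measurable_count_space_eq2_countable], intro conjI ballI)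
  show "(\<lambda>Y. prefix Y i) \<in> space cantor_measure \<rightarrow> UNIV" by simp
  fix v :: "bool list"
  have "{Y\<in>space cantor_measure. length v = i \<and> (\<forall>j<i. Y j = v ! j)} \<in> sets cantor_measure"
    unfolding cm_eq by measurable
  then show "(\<lambda>Y. prefix Y i) -` {v} \<inter> space cantor_measure \<in> sets cantor_measure"
    by (simp add: prefix_eq_iff vimage_def Int_def)
qed

lemma pred_prefix[measurable]: "(\<lambda>Y. P (prefix Y i)) \<in> measurable cantor_measure (count_space (UNIV::bool set))"
  using measurable_compose[OF meas_prefix, of "\<lambda>v. P v" "count_space UNIV"] by simp

lemma sets_ex_prefix: "{Y. \<exists>i. P i (prefix Y i)} \<in> sets cantor_measure"
proof -
  have "{Y\<in>space cantor_measure. \<exists>i. P i (prefix Y i)} \<in> sets cantor_measure" by measurable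
  then show ?thesis by simp
qed

lemma sets_prefix: "{Y. P (prefix Y i)} \<in> sets cantor_measure"
proof -
  have "{Y\<in>space cantor_measure. P (prefix Y i)} \<in> sets cantor_measure" by measurable
  then show ?thesis by simp
qed



definition cnt :: "(bool list \<Rightarrow> bool) \<Rightarrow> bool list \<Rightarrow> nat" where
  "cnt l w = card {j. j \<le> length w \<and> l (take j w)}"

lemma AVG_cnt: "AVG l w = real (cnt l w) / real (length w)"
proof -
  have "(\<Sum>i=0..length w. (if l (take i w) then 1 else 0)::real) = real (card ({0..length w} \<inter> {i. l (take i w)}))"
    by (simp add: sum.If_cases)
  also have "{0..length w} \<inter> {i. l (take i w)} = {j. j \<le> length w \<and> l (take j w)}" by auto
  finally show ?thesis by (simp add: AVG_def cnt_def)
qed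

lemma cnt_mono: "cnt l w \<le> cnt l (w @ v)"
  unfolding cnt_def by (rule card_mono) auto

lemma cnt_prefix: "cnt l (prefix Y i) = card (yes_set l Y \<inter> {..i})"
proof -
  have "{j. j \<le> length (prefix Y i) \<and> l (take j (prefix Y i))} = yes_set l Y \<inter> {..i}"
    by (auto simp: take_prefix yes_set_def min_def)
  then show ?thesis by (simp add: cnt_def)
qed

lemma yes_char: "(infinite (yes_set l Y) \<or> card (yes_set l Y) \<ge> n) \<longleftrightarrow> (\<exists>i. cnt l (prefix Y i) \<ge> n)"
proof
  assume a: "infinite (yes_set l Y) \<or> card (yes_set l Y) \<ge> n"
  show "\<exists>i. cnt l (prefix Y i) \<ge> n"
  proof (cases "finite (yes_set l Y)")
    case True
    then obtain i where i: "\<forall>x\<in>yes_set l Y. x \<le> i" using finite_nat_set_iff_bounded_le by blast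
    then have "yes_set l Y \<inter> {..i} = yes_set l Y" by auto
    with a True show ?thesis by (metis cnt_prefix)
  next
    case False
    then obtain F where F: "F \<subseteq> yes_set l Y" "finite F" "card F = n"
      using infinite_arbitrarily_large by blast
    then obtain i where i: "\<forall>x\<in>F. x \<le> i" using finite_nat_set_iff_bounded_le by blast
    have "F \<subseteq> yes_set l Y \<inter> {..i}" using F i by auto
    then have "n \<le> card (yes_set l Y \<inter> {..i})" using F by (metis card_mono finite_Int finite_atMost)
    then show ?thesis by (metis cnt_prefix)
  qed
next
  assume "\<exists>i. cnt l (prefix Y i) \<ge> n"
  then obtain i where "n \<le> card (yes_set l Y \<inter> {..i})" by (metis cnt_prefix)
  then show "infinite (yes_set l Y) \<or> card (yes_set l Y) \<ge> n"
    by (metis Int_lower1 card_mono le_trans)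
qed

lemma ex_le_Suc_iff: "(\<exists>i\<le>Suc k. Q i) \<longleftrightarrow> Q 0 \<or> (\<exists>i\<le>k. Q (Suc i))"
  by (metis Suc_le_mono le0 not0_implies_Suc)

lemma ville_k:
  fixes M :: "bool list \<Rightarrow> real"
  assumes nn: "\<And>w. M w \<ge> 0" and mart: "\<And>w. M w = (M (w @ [True]) + M (w @ [False])) / 2"
    and c: "c > 0"
  shows "measure cantor_measure {Y. \<exists>i\<le>k. c \<le> M (w @ prefix Y i)} \<le> M w / c"
proof (induction k arbitrary: w)
  case 0
  show ?case
  proof (cases "c \<le> M w")
    case True
    then have "1 \<le> M w / c" using c by simp
    then show ?thesis using cmP.prob_le_1 order_trans by blast
  next
    case False
    then show ?thesis using nn c by simp
  qed
next
  case (Suc k)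
  show ?case
  proof (cases "c \<le> M w")
    case True
    then have "1 \<le> M w / c" using c by simp
    then show ?thesis using cmP.prob_le_1 order_trans by blast
  next
    case False
    let ?S = "{Y. \<exists>i\<le>Suc k. c \<le> M (w @ prefix Y i)}"
    have S: "?S \<in> sets cantor_measure"
      using sets_ex_prefix[of "\<lambda>i v. i \<le> Suc k \<and> c \<le> M (w @ v)"] by simp
    have pre: "case_nat b -` ?S = {Y. \<exists>i\<le>k. c \<le> M ((w @ [b]) @ prefix Y i)}" for b
      using False by (auto simp: ex_le_Suc_iff prefix_cons_Suc)
    have "measure cantor_measure ?S = (measure cantor_measure (case_nat True -` ?S) + measure cantor_measure (case_nat False -` ?S)) / 2"
      by (rule dec_measure[OF S])
    also have "\<dots> \<le> (M (w @ [True]) / c + M (w @ [False]) / c) / 2"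
      unfolding pre using Suc.IH[of "w @ [True]"] Suc.IH[of "w @ [False]"] by (intro divide_right_mono add_mono) simp_all
    also have "\<dots> = M w / c" using c by (subst mart[of w]) (simp add: field_simps)
    finally show ?thesis .
  qed
qed

lemma ville:
  fixes M :: "bool list \<Rightarrow> real"
  assumes nn: "\<And>w. M w \<ge> 0" and mart: "\<And>w. M w = (M (w @ [True]) + M (w @ [False])) / 2"
    and c: "c > 0"
  shows "measure cantor_measure {Y. \<exists>i. c \<le> M (prefix Y i)} \<le> M [] / c"
proof -
  let ?A = "\<lambda>k. {Y. \<exists>i\<le>k. c \<le> M ([] @ prefix Y i)}"
  have A: "range ?A \<subseteq> sets cantor_measure"
    using sets_ex_prefix[of "\<lambda>i v. i \<le> k \<and> c \<le> M ([] @ v)" for k] by auto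
  have inc: "incseq ?A" by (auto simp: incseq_def) (meson order_trans)
  have U: "(\<Union>k. ?A k) = {Y. \<exists>i. c \<le> M (prefix Y i)}" by auto
  have "(\<lambda>k. measure cantor_measure (?A k)) \<longlonglongrightarrow> measure cantor_measure (\<Union>k. ?A k)"
    by (rule Lim_measure_incseq[OF A inc]) simp
  then have "measure cantor_measure (\<Union>k. ?A k) \<le> M [] / c"
    by (rule LIMSEQ_le_const2) (use ville_k[OF nn mart c, of _ "[]"] in auto)
  then show ?thesis using U by simp
qed



definition newlev :: "(nat \<Rightarrow> real) \<Rightarrow> nat \<Rightarrow> bool" where
  "newlev f j \<longleftrightarrow> (\<exists>k::nat\<ge>1. 2^k \<le> f j \<and> (\<forall>j'<j. f j' < 2^k))"

lemma count_upper:
  assumes n: "n \<ge> 1" and c: "n \<le> card {j. j \<le> i \<and> newlev f j}"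
  shows "\<exists>j\<le>i. (2::real)^n \<le> f j"
proof (rule ccontr)
  assume "\<not> ?thesis"
  then have lt: "\<And>j. j \<le> i \<Longrightarrow> f j < 2^n" by force
  let ?J = "{j. j \<le> i \<and> newlev f j}"
  define g where "g j = (SOME k::nat. k \<ge> 1 \<and> 2^k \<le> f j \<and> (\<forall>j'<j. f j' < 2^k))" for j
  have g: "g j \<ge> 1 \<and> 2^(g j) \<le> f j \<and> (\<forall>j'<j. f j' < 2^(g j))" if "j \<in> ?J" for j
    using that unfolding g_def newlev_def by (metis (mono_tags, lifting) someI_ex mem_Collect_eq)
  have inj: "inj_on g ?J"
  proof (rule inj_onI)
    fix a b assume a: "a \<in> ?J" and b: "b \<in> ?J" and e: "g a = g b"
    show "a = b"
    proof (rule ccontr)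
      assume "a \<noteq> b"
      then consider "a < b" | "b < a" by linarith
      then show False
      proof cases
        case 1
        then have "f a < 2^(g b)" using g[OF b] by blast
        then show False using g[OF a] e by simp
      next
        case 2
        then have "f b < 2^(g a)" using g[OF a] by blast
        then show False using g[OF b] e by simp
      qed
    qed
  qed
  have img: "g ` ?J \<subseteq> {1..<n}"
  proof
    fix k assume "k \<in> g ` ?J"
    then obtain j where j: "j \<in> ?J" "k = g j" by blast
    have "j \<le> i" using j by simp
    then have "(2::real)^(g j) < 2^n" using g[OF j(1)] lt[of j] by linarith
    then have "k < n" using j(2) power_strict_increasing_iff[of "2::real"] by simp
    then show "k \<in> {1..<n}" using g[OF j(1)] j by simp
  qed
  have "card ?J \<le> card {1..<n}" by (rule card_inj_on_le[OF inj img]) simp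
  then show False using c n by simp
qed

lemma count_lower:
  assumes f0: "f 0 < 2" and dbl: "\<And>j. f (Suc j) \<le> 2 * f j"
    and L: "(2::real)^L \<le> f i"
  shows "L \<le> card {j. j \<le> i \<and> newlev f j}"
proof -
  define p where "p k = (LEAST j. (2::real)^k \<le> f j)" for k
  have pk: "2^k \<le> f (p k) \<and> p k \<le> i \<and> (\<forall>j'<p k. f j' < 2^k)" if "k \<in> {1..L}" for k
  proof -
    have "(2::real)^k \<le> 2^L" using that by (simp add: power_increasing)
    then have ex: "(2::real)^k \<le> f i" using L by linarith
    have l1: "2^k \<le> f (p k)" unfolding p_def by (rule LeastI[where P="\<lambda>j. (2::real)^k \<le> f j", OF ex])
    have l2: "p k \<le> i" unfolding p_def by (rule Least_le[where P="\<lambda>j. (2::real)^k \<le> f j", OF ex])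
    have l3: "\<forall>j'<p k. f j' < 2^k" unfolding p_def using not_less_Least not_le by blast
    show ?thesis using l1 l2 l3 by blast
  qed
  have inj: "inj_on p {1..L}"
  proof (rule inj_onI, rule ccontr)
    fix a b assume a: "a \<in> {1..L}" and b: "b \<in> {1..L}" and e: "p a = p b" and ne: "a \<noteq> b"
    have key: False if a: "a \<in> {1..L}" and b: "b \<in> {1..L}" and e: "p a = p b" and lt: "a < b" for a b
    proof -
      have "p b \<noteq> 0"
      proof
        assume "p b = 0"
        then have "(2::real)^b \<le> f 0" using pk[OF b] by simp
        moreover have "(2::real) \<le> 2^b" using b by (metis atLeastAtMost_iff power_increasing power_one_right one_le_numeral)
        ultimately show False using f0 by linarith
      qed
      then obtain q where q: "p b = Suc q" using not0_implies_Suc by blast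
      have "f q < 2^a" using pk[OF a] e q by simp
      then have "f (Suc q) < 2^(Suc a)" using dbl[of q] by simp
      moreover have "(2::real)^(Suc a) \<le> 2^b" using lt power_increasing[of "Suc a" b "2::real"] by simp
      moreover have "(2::real)^b \<le> f (Suc q)" using pk[OF b] q by simp
      ultimately show False by linarith
    qed
    from ne consider "a < b" | "b < a" by linarith
    then show False by cases (use key[OF a b e] key[OF b a e[symmetric]] in auto)
  qed
  have img: "p ` {1..L} \<subseteq> {j. j \<le> i \<and> newlev f j}"
    using pk unfolding newlev_def by auto
  have "card {1..L} \<le> card {j. j \<le> i \<and> newlev f j}"
    by (rule card_inj_on_le[OF inj img]) simp
  then show ?thesis by simp
qed



lemma liminf_lb:
  assumes ev: "eventually (\<lambda>m. a - 1 / real m \<le> f m) sequentially"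
  shows "ereal a \<le> Liminf sequentially (\<lambda>m. ereal (f m))"
proof -
  have t: "(\<lambda>m. ereal (a - 1 / real m)) \<longlonglongrightarrow> ereal a"
    by (intro tendsto_ereal tendsto_eq_intros lim_1_over_n) auto
  have "Liminf sequentially (\<lambda>m. ereal (a - 1 / real m)) = ereal a"
    by (rule lim_imp_Liminf[OF _ t]) simp
  moreover have "Liminf sequentially (\<lambda>m. ereal (a - 1 / real m)) \<le> Liminf sequentially (\<lambda>m. ereal (f m))"
    by (rule Liminf_mono) (use ev in \<open>auto elim: eventually_mono\<close>)
  ultimately show ?thesis by simp
qed

lemma liminf_inf_ev:
  assumes "Liminf sequentially (\<lambda>m. ereal (f m)) = \<infinity>"
  shows "eventually (\<lambda>m. c < f m) sequentially"
proof -
  have "\<infinity> \<le> Liminf sequentially (\<lambda>m. ereal (f m))" using assms by simp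
  then have "\<forall>y<\<infinity>. eventually (\<lambda>m. y < ereal (f m)) sequentially"
    unfolding le_Liminf_iff by blast
  from this[rule_format, of "ereal c"] show ?thesis by simp
qed

lemma two_powr_neg: "(2::real) powr (- real n) = 1 / 2^n"
  by (simp add: powr_minus powr_realpow divide_inverse)

lemma P_sub_G:
  assumes s: "s \<ge> 0" and g: "is_gale s d" and succ: "\<forall>X\<in>\<Gamma>. succeeds_strongly d X"
  shows "s \<in> G_str \<Gamma>"
proof -
  define K where "K = d [] + 1"
  have dnn: "\<And>w. d w \<ge> 0" using g by (simp add: is_gale_def)
  have K: "K > 0" using dnn[of "[]"] by (simp add: K_def)
  define M where "M w = d w / K * 2 powr ((1 - s) * real (length w))" for w
  have nn: "\<And>w. M w \<ge> 0" using dnn K by (simp add: M_def)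
  have mart: "M w = (M (w @ [True]) + M (w @ [False])) / 2" for w
  proof -
    let ?n = "real (length w)"
    have ge0: "d w * 2 powr (- s * ?n) = d (w @ [False]) * 2 powr (- s * real (length w + 1)) + d (w @ [True]) * 2 powr (- s * real (length w + 1))"
      using g unfolding is_gale_def by blast
    have ge: "d w * 2 powr (- s * ?n) = d (w @ [False]) * 2 powr (- s * (?n + 1)) + d (w @ [True]) * 2 powr (- s * (?n + 1))"
      using ge0 by (simp add: add.commute)
    have e1: "2 powr (- s * ?n) * 2 powr ?n = 2 powr ((1 - s) * ?n)"
      by (simp add: powr_add[symmetric] algebra_simps)
    have e2: "2 powr (- s * (?n + 1)) * 2 powr ?n = 2 powr ((1 - s) * (?n + 1)) / 2"
    proof -
      have "- s * (?n + 1) + ?n = (1 - s) * (?n + 1) - 1" by algebra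
      then have "2 powr (- s * (?n + 1)) * 2 powr ?n = 2 powr ((1 - s) * (?n + 1) - 1)"
        by (simp add: powr_add[symmetric])
      also have "\<dots> = 2 powr ((1 - s) * (?n + 1)) / 2" by (simp add: powr_diff)
      finally show ?thesis .
    qed
    have "M w = d w * 2 powr (- s * ?n) * 2 powr ?n / K" by (simp add: M_def e1[symmetric] mult.assoc)
    also have "\<dots> = (d (w @ [False]) + d (w @ [True])) * (2 powr (- s * (?n + 1)) * 2 powr ?n) / K"
      by (simp only: ge) (simp add: algebra_simps)
    also have "\<dots> = (M (w @ [True]) + M (w @ [False])) / 2"
    proof -
      have hM: "M (w @ [b]) = d (w @ [b]) / K * 2 powr ((1 - s) * (?n + 1))" for b
        by (simp add: M_def add.commute)
      show ?thesis using K by (simp only: e2 hM) (simp add: field_simps)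
    qed
    finally show ?thesis .
  qed
  have M0: "M [] < 1" using K by (simp add: M_def K_def)
  have dbl: "M (w @ [b]) \<le> 2 * M w" for w b
    using mart[of w] nn[of "w @ [True]"] nn[of "w @ [False]"] by (cases b) auto
  define l where "l w = (\<exists>k::nat\<ge>1. 2^k \<le> M w \<and> (\<forall>j'<length w. M (take j' w) < 2^k))" for w
  have lpre: "l (prefix Y j) = newlev (\<lambda>j. M (prefix Y j)) j" for Y j
    by (simp add: l_def newlev_def take_prefix min_def cong: conj_cong)
  have cntpre: "cnt l (prefix Y i) = card {j. j \<le> i \<and> newlev (\<lambda>j. M (prefix Y j)) j}" for Y i
  proof -
    have "{j. j \<le> length (prefix Y i) \<and> l (take j (prefix Y i))} = {j. j \<le> i \<and> newlev (\<lambda>j. M (prefix Y j)) j}"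
      by (auto simp: take_prefix min_def lpre)
    then show ?thesis by (simp add: cnt_def)
  qed
  have f0: "M (prefix Y 0) < 2" for Y using M0 by simp
  have fdbl: "M (prefix Y (Suc j)) \<le> 2 * M (prefix Y j)" for Y j
    by (simp add: prefix_Suc dbl)
  have meas: "measure cantor_measure
         {Y \<in> space cantor_measure. infinite (yes_set l Y) \<or> card (yes_set l Y) \<ge> n}
       \<le> 2 powr (- real n)" for n
  proof (cases "n = 0")
    case True
    then show ?thesis using cmP.prob_le_1 by simp
  next
    case False
    have sub: "{Y \<in> space cantor_measure. infinite (yes_set l Y) \<or> card (yes_set l Y) \<ge> n}
        \<subseteq> {Y. \<exists>i. (2::real)^n \<le> M (prefix Y i)}"
    proof
      fix Y assume "Y \<in> {Y \<in> space cantor_measure. infinite (yes_set l Y) \<or> card (yes_set l Y) \<ge> n}"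
      then obtain i where "n \<le> cnt l (prefix Y i)" using yes_char by blast
      then have "\<exists>j\<le>i. (2::real)^n \<le> M (prefix Y j)"
        using count_upper[of n i "\<lambda>j. M (prefix Y j)"] False by (simp add: cntpre)
      then show "Y \<in> {Y. \<exists>i. (2::real)^n \<le> M (prefix Y i)}" by blast
    qed
    have "measure cantor_measure {Y \<in> space cantor_measure. infinite (yes_set l Y) \<or> card (yes_set l Y) \<ge> n}
       \<le> measure cantor_measure {Y. \<exists>i. (2::real)^n \<le> M (prefix Y i)}"
      by (rule cmP.finite_measure_mono[OF sub]) (rule sets_ex_prefix)
    also have "\<dots> \<le> M [] / 2^n" by (rule ville[OF nn mart]) simp
    also have "\<dots> \<le> 1 / 2^n" using M0 by (simp add: divide_right_mono)
    finally show ?thesis by (simp add: two_powr_neg)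
  qed
  have avg: "Liminf sequentially (\<lambda>m. ereal (AVG l (prefix X m))) \<ge> ereal (1 - s)" if X: "X \<in> \<Gamma>" for X
  proof -
    have "eventually (\<lambda>m. K < d (prefix X m)) sequentially"
      using succ X by (intro liminf_inf_ev) (simp add: succeeds_strongly_def)
    then have ev: "eventually (\<lambda>m. real m > 0 \<and> K < d (prefix X m)) sequentially"
      by (rule eventually_conj[OF eventually_gt_at_top[of 0], simplified, THEN eventually_mono]) auto
    show ?thesis
    proof (rule liminf_lb, rule eventually_mono[OF ev], elim conjE)
      fix m assume m: "0 < real m" and dK: "K < d (prefix X m)"
      have "1 \<le> d (prefix X m) / K" using dK K by simp
      then have "1 * 2 powr ((1 - s) * real m) \<le> d (prefix X m) / K * 2 powr ((1 - s) * real m)"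
        by (rule mult_right_mono) simp
      then have Mge: "2 powr ((1 - s) * real m) \<le> M (prefix X m)"
        by (simp add: M_def)
      have cb: "(1 - s) * real m - 1 \<le> real (cnt l (prefix X m))"
      proof (cases "(1 - s) * real m \<ge> 1")
        case True
        define L where "L = nat \<lfloor>(1 - s) * real m\<rfloor>"
        have Lr: "real L \<le> (1 - s) * real m" "(1 - s) * real m - 1 \<le> real L"
          using True by (simp_all add: L_def)
        have "(2::real)^L = 2 powr (real L)" by (simp add: powr_realpow)
        also have "\<dots> \<le> 2 powr ((1 - s) * real m)" using Lr(1) by simp
        finally have "(2::real)^L \<le> M (prefix X m)" using Mge by linarith
        then have "L \<le> cnt l (prefix X m)"
          unfolding cntpre by (rule count_lower[OF f0 fdbl])
        then show ?thesis using Lr(2) by linarith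
      next
        case False
        then show ?thesis by simp
      qed
      have "AVG l (prefix X m) = real (cnt l (prefix X m)) / real m" by (simp add: AVG_cnt)
      also have "\<dots> \<ge> ((1 - s) * real m - 1) / real m" using cb m by (simp add: divide_right_mono)
      finally show "1 - s - 1 / real m \<le> AVG l (prefix X m)" using m by (simp add: diff_divide_distrib)
    qed
  qed
  show ?thesis unfolding G_str_def strongly_learns_def using s meas avg by blast
qed



definition V :: "(bool list \<Rightarrow> bool) \<Rightarrow> nat \<Rightarrow> bool list \<Rightarrow> real" where
  "V l n w = measure cantor_measure {Y. \<exists>j. n \<le> cnt l (w @ prefix Y j)}"

lemma V_sets: "{Y. \<exists>j. n \<le> cnt l (w @ prefix Y j)} \<in> sets cantor_measure"
  using sets_ex_prefix[of "\<lambda>j v. n \<le> cnt l (w @ v)"] by simp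

lemma V_nn: "V l n w \<ge> 0" by (simp add: V_def)
lemma V_le1: "V l n w \<le> 1" by (simp add: V_def cmP.prob_le_1)

lemma V_mart: "V l n w = (V l n (w @ [True]) + V l n (w @ [False])) / 2"
proof -
  let ?S = "{Y. \<exists>j. n \<le> cnt l (w @ prefix Y j)}"
  have pre: "case_nat b -` ?S = {Y. \<exists>j. n \<le> cnt l ((w @ [b]) @ prefix Y j)}" for b
  proof (intro set_eqI iffI)
    fix Y assume "Y \<in> case_nat b -` ?S"
    then obtain j where j: "n \<le> cnt l (w @ prefix (case_nat b Y) j)" by auto
    show "Y \<in> {Y. \<exists>j. n \<le> cnt l ((w @ [b]) @ prefix Y j)}"
    proof (cases j)
      case 0
      then have "n \<le> cnt l (w @ [b])" using j cnt_mono[of l w "[b]"] by simp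
      then have "n \<le> cnt l ((w @ [b]) @ prefix Y 0)" by simp
      then show ?thesis by blast
    next
      case (Suc i)
      then have "n \<le> cnt l ((w @ [b]) @ prefix Y i)" using j by (simp add: prefix_cons_Suc)
      then show ?thesis by blast
    qed
  next
    fix Y assume "Y \<in> {Y. \<exists>j. n \<le> cnt l ((w @ [b]) @ prefix Y j)}"
    then obtain j where "n \<le> cnt l ((w @ [b]) @ prefix Y j)" by auto
    then have "n \<le> cnt l (w @ prefix (case_nat b Y) (Suc j))" by (simp add: prefix_cons_Suc)
    then show "Y \<in> case_nat b -` ?S" by blast
  qed
  show ?thesis unfolding V_def using dec_measure[OF V_sets[of n l w]] pre by simp
qed

lemma V_root: "V l n [] = measure cantor_measure
         {Y \<in> space cantor_measure. infinite (yes_set l Y) \<or> card (yes_set l Y) \<ge> n}"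
  unfolding V_def using yes_char[of l _ n] by simp

lemma V_one: "n \<le> cnt l w \<Longrightarrow> V l n w = 1"
proof -
  assume "n \<le> cnt l w"
  then have "{Y. \<exists>j. n \<le> cnt l (w @ prefix Y j)} = space cantor_measure"
    by (auto intro: exI[of _ 0])
  then show ?thesis using cmP.prob_space by (simp add: V_def)
qed

lemma V_growth: "V l n w \<le> 2 ^ length w * V l n []"
proof (induction w rule: rev_induct)
  case Nil then show ?case by simp
next
  case (snoc b w)
  have "V l n (w @ [b]) \<le> 2 * V l n w"
    using V_mart[of l n w] V_nn[of l n "w @ [True]"] V_nn[of l n "w @ [False]"] by (cases b) auto
  also have "\<dots> \<le> 2 * (2 ^ length w * V l n [])" using snoc by simp
  finally show ?case by simp
qed

lemma ev_lin_gt: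
  assumes C: "C > 0"
  shows "eventually (\<lambda>m. R < C * real m) sequentially"
proof (rule eventually_sequentiallyI[of "nat \<lceil>R / C\<rceil> + 1"])
  fix m assume "nat \<lceil>R / C\<rceil> + 1 \<le> m"
  then have "R / C < real m" by linarith
  then show "R < C * real m" using C by (simp add: divide_less_eq mult.commute)
qed

lemma liminf_inf:
  assumes c: "c > 0" and ev: "eventually (\<lambda>m. 2 powr (c * real m) \<le> f m) sequentially"
  shows "Liminf sequentially (\<lambda>m. ereal (f m)) = \<infinity>"
proof -
  have "\<infinity> \<le> Liminf sequentially (\<lambda>m. ereal (f m))"
    unfolding le_Liminf_iff
  proof (intro allI impI)
    fix y :: ereal assume "y < \<infinity>"
    then obtain r where yr: "y \<le> ereal r" by (cases y) auto
    have cl: "c * ln 2 > 0" using c by simp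
    have "eventually (\<lambda>m. r < (c * ln 2) * real m) sequentially" by (rule ev_lin_gt[OF cl])
    then have "eventually (\<lambda>m. r < f m) sequentially"
    proof (rule eventually_mono[OF eventually_conj[OF _ ev]], elim conjE)
      fix m assume a: "r < c * ln 2 * real m" and b: "2 powr (c * real m) \<le> f m"
      have "c * ln 2 * real m < exp (c * real m * ln 2)" using exp_gt_self[of "c * real m * ln 2"] by (simp add: ac_simps)
      also have "\<dots> = 2 powr (c * real m)" by (simp add: powr_def)
      finally show "r < f m" using a b by linarith
    qed
    then show "eventually (\<lambda>m. y < ereal (f m)) sequentially"
      by (rule eventually_mono) (use yr in \<open>auto intro: le_less_trans\<close>)
  qed
  then show ?thesis by simp
qed

lemma G_sub_P:
  assumes sG: "s \<in> G_str \<Gamma>" and e: "0 < e" "e \<le> 1"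
  shows "s + e \<in> {s. s \<ge> 0 \<and> (\<exists>d. is_gale s d \<and> (\<forall>X\<in>\<Gamma>. succeeds_strongly d X))}"
proof (cases "\<Gamma> = {}")
  case True
  from sG have s: "s \<ge> 0" by (simp add: G_str_def)
  have "is_gale (s + e) (\<lambda>_. 0)" by (simp add: is_gale_def)
  then show ?thesis using True s e by auto
next
  case False
  then obtain X0 where X0: "X0 \<in> \<Gamma>" by blast
  from sG obtain l where s: "s \<ge> 0" and L: "\<forall>X\<in>\<Gamma>. strongly_learns l s X" by (auto simp: G_str_def)
  have root: "V l n [] \<le> (1/2)^n" for n
    using L X0 unfolding strongly_learns_def V_root by (simp add: two_powr_neg power_one_over)
  define a where "a = 1 - e / 4"
  define q where "q = (2::real) powr a"
  have q0: "q > 0" by (simp add: q_def)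
  have q2: "q < 2" unfolding q_def a_def using e powr_less_mono[of "1 - e/4" 1 "2::real"] by simp
  have tb: "q^n * V l n w \<le> 2 ^ length w * (q/2)^n" for n w
  proof -
    have "V l n w \<le> 2 ^ length w * (1/2)^n"
      using V_growth[of l n w] root[of n] by (meson mult_left_mono order_trans zero_le_numeral zero_le_power)
    then have "q^n * V l n w \<le> q^n * (2 ^ length w * (1/2)^n)" using q0 by (simp add: mult_left_mono)
    also have "\<dots> = 2 ^ length w * (q/2)^n" by (simp add: power_divide field_simps)
    finally show ?thesis .
  qed
  have summ: "summable (\<lambda>n. q^n * V l n w)" for w
  proof (rule summable_comparison_test'[where N=0])
    show "summable (\<lambda>n. 2 ^ length w * (q/2)^n)"
      by (rule summable_mult, rule summable_geometric) (use q0 q2 in simp)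
    show "norm (q^n * V l n w) \<le> 2 ^ length w * (q/2)^n" for n
      using tb[of n w] q0 V_nn[of l n w] by simp
  qed
  define D where "D w = (\<Sum>n. q^n * V l n w)" for w
  have Dnn: "D w \<ge> 0" for w unfolding D_def
    by (rule suminf_nonneg[OF summ]) (simp add: V_nn q0 less_imp_le)
  have Dmart: "D w = (D (w @ [True]) + D (w @ [False])) / 2" for w
  proof -
    have "(D (w @ [True]) + D (w @ [False])) / 2 = (\<Sum>n. q^n * V l n (w @ [True]) + q^n * V l n (w @ [False])) / 2"
      unfolding D_def by (simp add: suminf_add[OF summ summ])
    also have "\<dots> = (\<Sum>n. (q^n * V l n (w @ [True]) + q^n * V l n (w @ [False])) / 2)"
      by (rule suminf_divide[symmetric]) (intro summable_add summ)
    also have "\<dots> = D w" unfolding D_def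
      by (rule suminf_cong) (subst V_mart[of l _ w], simp add: algebra_simps)
    finally show ?thesis by simp
  qed
  have Dlb: "q ^ cnt l w \<le> D w" for w
  proof -
    have "sum (\<lambda>n. q^n * V l n w) {cnt l w} \<le> D w" unfolding D_def
      by (rule sum_le_suminf[OF summ]) (auto simp: V_nn q0 less_imp_le)
    then show ?thesis by (simp add: V_one)
  qed
  define t where "t = s + e"
  define d where "d w = D w * 2 powr ((t - 1) * real (length w))" for w
  have gale: "is_gale t d"
    unfolding is_gale_def
  proof (intro conjI allI)
    show "0 \<le> d w" for w by (simp add: d_def Dnn)
    fix w :: "bool list"
    let ?n = "real (length w)"
    have e1: "2 powr ((t - 1) * ?n) * 2 powr (- t * ?n) = 2 powr (- ?n)"
      by (simp add: powr_add[symmetric] algebra_simps)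
    have e2: "2 powr ((t - 1) * (?n + 1)) * 2 powr (- t * (?n + 1)) = 2 powr (- ?n) / 2"
    proof -
      have "(t - 1) * (?n + 1) + - t * (?n + 1) = - ?n - 1" by algebra
      then have "2 powr ((t - 1) * (?n + 1)) * 2 powr (- t * (?n + 1)) = 2 powr (- ?n - 1)"
        by (simp add: powr_add[symmetric])
      also have "\<dots> = 2 powr (- ?n) / 2" by (simp add: powr_diff)
      finally show ?thesis .
    qed
    have hd: "d (w @ [b]) = D (w @ [b]) * 2 powr ((t - 1) * (?n + 1))" for b
      by (simp add: d_def add.commute)
    have "d w * 2 powr (- t * ?n) = D w * 2 powr (- ?n)"
      by (simp add: d_def e1[symmetric] mult.assoc)
    also have "\<dots> = (D (w @ [False]) + D (w @ [True])) * (2 powr (- ?n) / 2)"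
      by (subst Dmart) (simp add: algebra_simps)
    also have "\<dots> = d (w @ [False]) * 2 powr (- t * real (length w + 1)) + d (w @ [True]) * 2 powr (- t * real (length w + 1))"
      by (simp only: hd e2[symmetric]) (simp add: algebra_simps add.commute)
    finally show "d w * 2 powr (- t * real (length w)) = d (w @ [False]) * 2 powr (- t * real (length w + 1)) + d (w @ [True]) * 2 powr (- t * real (length w + 1))" .
  qed
  have succ: "succeeds_strongly d X" if X: "X \<in> \<Gamma>" for X
  proof -
    have lim: "ereal (1 - s) \<le> Liminf sequentially (\<lambda>m. ereal (AVG l (prefix X m)))"
      using L X by (simp add: strongly_learns_def)
    have "eventually (\<lambda>m. ereal (1 - s - e/4) < ereal (AVG l (prefix X m))) sequentially"
    proof -
      have "\<forall>y<ereal (1 - s). eventually (\<lambda>m. y < ereal (AVG l (prefix X m))) sequentially"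
        using lim unfolding le_Liminf_iff by blast
      from this[rule_format, of "ereal (1 - s - e/4)"] show ?thesis using e by simp
    qed
    then have ev: "eventually (\<lambda>m. 0 < real m \<and> 1 - s - e/4 < AVG l (prefix X m)) sequentially"
      by (rule eventually_conj[OF eventually_gt_at_top[of 0], simplified, THEN eventually_mono]) auto
    show ?thesis unfolding succeeds_strongly_def
    proof (rule liminf_inf[of "e/2"])
      show "0 < e / 2" using e by simp
      show "eventually (\<lambda>m. 2 powr (e / 2 * real m) \<le> d (prefix X m)) sequentially"
      proof (rule eventually_mono[OF ev], elim conjE)
        fix m assume m: "0 < real m" and av: "1 - s - e/4 < AVG l (prefix X m)"
        define c where "c = cnt l (prefix X m)"
        have cb: "(1 - s - e/4) * real m < real c"
          using av m by (simp add: AVG_cnt c_def pos_less_divide_eq)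
        have ex: "e / 2 * real m \<le> a * real c + (t - 1) * real m"
        proof (cases "1 - s - e/4 \<le> 0")
          case True
          have "a * real c \<ge> 0" using e by (simp add: a_def)
          moreover have "e / 2 * real m \<le> (t - 1) * real m"
            using True m e by (intro mult_right_mono) (simp_all add: t_def)
          ultimately show ?thesis by linarith
        next
          case False
          have a0: "a \<ge> 0" using e by (simp add: a_def)
          have "a * ((1 - s - e/4) * real m) \<le> a * real c" using cb a0 by (simp add: mult_left_mono)
          moreover have "e / 2 \<le> a * (1 - s - e/4) + (t - 1)"
          proof -
            have "e / 4 * (1 - s - e/4) \<le> e / 4 * 1" using e s by (intro mult_left_mono) simp_all
            then show ?thesis by (simp add: a_def t_def algebra_simps)
          qed
          then have "e / 2 * real m \<le> (a * (1 - s - e/4) + (t - 1)) * real m"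
            using m by (simp add: mult_right_mono)
          ultimately show ?thesis by (simp add: algebra_simps)
        qed
        have "2 powr (e / 2 * real m) \<le> 2 powr (a * real c + (t - 1) * real m)"
          using ex by simp
        also have "\<dots> = q ^ c * 2 powr ((t - 1) * real m)"
          by (simp add: q_def powr_add powr_powr[symmetric] powr_realpow)
        also have "\<dots> \<le> D (prefix X m) * 2 powr ((t - 1) * real m)"
          using Dlb[of "prefix X m"] by (simp add: c_def mult_right_mono)
        finally show "2 powr (e / 2 * real m) \<le> d (prefix X m)" by (simp add: d_def)
      qed
    qed
  qed
  show ?thesis using s e gale succ by (auto simp: t_def)
qed



lemma one_in_G: "1 \<in> G_str \<Gamma>"
proof -
  have "strongly_learns (\<lambda>_. False) 1 X" for X
  proof -
    have m: "measure cantor_measure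
         {Y \<in> space cantor_measure. infinite (yes_set (\<lambda>_. False) Y) \<or> card (yes_set (\<lambda>_. False) Y) \<ge> n}
       \<le> 2 powr (- real n)" for n
      by (cases "n = 0") (auto simp: yes_set_def cmP.prob_le_1)
    have "AVG (\<lambda>_. False) w = 0" for w by (simp add: AVG_def)
    then have "Liminf sequentially (\<lambda>n. ereal (AVG (\<lambda>_. False) (prefix X n))) = 0"
      by (simp add: Liminf_const zero_ereal_def)
    then show ?thesis using m by (simp add: strongly_learns_def zero_ereal_def)
  qed
  then show ?thesis by (auto simp: G_str_def)
qed

lemma aux: "(I::real) \<le> s + e \<Longrightarrow> e \<le> (I - s) / 2 \<Longrightarrow> s < I \<Longrightarrow> 0 < e \<Longrightarrow> False"
  by (simp add: field_simps)

theorem mainTheorem8: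
  fixes \<Gamma> :: "(nat \<Rightarrow> bool) set"
  shows "packing_dim \<Gamma> = Inf (G_str \<Gamma>)"
proof -
  let ?P = "{s. s \<ge> 0 \<and> (\<exists>d. is_gale s d \<and> (\<forall>X\<in>\<Gamma>. succeeds_strongly d X))}"
  let ?G = "G_str \<Gamma>"
  have PG: "?P \<subseteq> ?G" using P_sub_G by blast
  have bP: "bdd_below ?P" by (rule bdd_belowI[of _ 0]) auto
  have bG: "bdd_below ?G" by (rule bdd_belowI[of _ 0]) (auto simp: G_str_def)
  have Gne: "?G \<noteq> {}" using one_in_G by blast
  have m1: "(1::real) + 1 \<in> ?P" by (rule G_sub_P[OF one_in_G]) simp_all
  have Pne: "?P \<noteq> {}" using m1 by (metis empty_iff)
  have le1: "Inf ?G \<le> Inf ?P" by (rule cInf_superset_mono[OF Pne bG PG])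
  have le2: "Inf ?P \<le> Inf ?G"
  proof (rule cInf_greatest[OF Gne])
    fix s assume sG: "s \<in> ?G"
    show "Inf ?P \<le> s"
    proof (rule ccontr)
      assume "\<not> Inf ?P \<le> s"
      define e where "e = min 1 ((Inf ?P - s) / 2)"
      have e: "0 < e" "e \<le> 1" using \<open>\<not> Inf ?P \<le> s\<close> by (auto simp: e_def)
      have "Inf ?P \<le> s + e" by (rule cInf_lower[OF G_sub_P[OF sG e] bP])
      moreover have "e \<le> (Inf ?P - s) / 2" unfolding e_def by (rule min.cobounded2)
      moreover have "s < Inf ?P" using \<open>\<not> Inf ?P \<le> s\<close> by simp
      ultimately show False using aux e(1) by blast
    qed
  qed
  show ?thesis unfolding packing_dim_def using le1 le2 by linarith
qed

end
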